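(* Let $\Sigma$ be a finite set of actions and consider KAT expressions over $\Sigma$ with the empty set of primitive tests. The deterministic fragment of KA is generated by sequential composition together with the constants $\mathsf{true}$ and $\mathsf{false}$: every term built from actions $p\in\Sigma$, $\mathsf{true}$ and $\mathsf{false}$ using $\cdot$ is deterministic, and for every deterministic $e\in\mathsf{KAT}(\Sigma,\emptyset)$ there is such a term $f$ with $L(f)=L(e)$.
   Context: $\mathsf{BA}(\emptyset)$: variable-free Boolean expressions $b::=\mathsf{false}\mid\mathsf{true}\mid b\vee c\mid b\wedge c\mid\overline b$. $\mathsf{KAT}(\Sigma,\emptyset)$ (KA-terms): $e::=b\mid p\in\Sigma\mid e+f\mid e\cdot f\mid e^*$. There is one atom, $\mathsf{At}_\emptyset=\{\emptyset\}$; guarded strings are words in $\mathsf{At}(\Sigma\mathsf{At})^*$. $w'\alpha\diamond\alpha x'=w'\alpha x'$; $L\diamond K=\{w\diamond x:w\in L,x\in K\}$; $L^{(0)}=\mathsf{At}$, $L^{(n+1)}=L\diamond L^{(n)}$, $L^{( * )}=\bigcup_nL^{(n)}$. $L(b)=\{\emptyset\}$ if $b$ evaluates to true and $\emptyset$ otherwise, $L(p)=\{\alpha p\beta\}$, $L(e+f)=L(e)\cup L(f)$, $L(ef)=L(e)\diamond L(f)$, $L(e^* )=L(e)^{( * )}$. An expression $e$ is deterministic if $L(e)$ is deterministic: for distinct $w,w'\in L(e)$, $w$ is not a proper prefix of $w'$ and the first position where they differ is an atom (equivalently, its relational interpretation is a partial function whenever each action is interpreted as a partial function). *)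

theory Defs
  imports Main
begin

datatype bexp = BFalse | BTrue | BOr bexp bexp | BAnd bexp bexp | BNot bexp

fun beval :: "bexp \<Rightarrow> bool" where
  "beval BFalse = False"
| "beval BTrue = True"
| "beval (BOr b c) = (beval b \<or> beval c)"
| "beval (BAnd b c) = (beval b \<and> beval c)"
| "beval (BNot b) = (\<not> beval b)"

datatype 'a kat = Test bexp | Prim 'a | Plus "'a kat" "'a kat"
  | Seq "'a kat" "'a kat" | Star "'a kat"

(* Letters of guarded strings: the unique atom (the empty set of tests) or an action *)
datatype 'a gsym = Atom | Act 'a

type_synonym 'a gstring = "'a gsym list"

definition At :: "'a gstring set" where
  "At = {[Atom]}"

definition fuse :: "'a gstring set \<Rightarrow> 'a gstring set \<Rightarrow> 'a gstring set" where
  "fuse L K = {butlast w @ x | w x. w \<in> L \<and> x \<in> K \<and> w \<noteq> [] \<and> x \<noteq> []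
                                  \<and> last w = hd x}"

fun fpow :: "'a gstring set \<Rightarrow> nat \<Rightarrow> 'a gstring set" where
  "fpow L 0 = At"
| "fpow L (Suc n) = fuse L (fpow L n)"

definition fstar :: "'a gstring set \<Rightarrow> 'a gstring set" where
  "fstar L = (\<Union>n. fpow L n)"

fun lang :: "'a kat \<Rightarrow> 'a gstring set" where
  "lang (Test b) = (if beval b then At else {})"
| "lang (Prim p) = {[Atom, Act p, Atom]}"
| "lang (Plus e f) = lang e \<union> lang f"
| "lang (Seq e f) = fuse (lang e) (lang f)"
| "lang (Star e) = fstar (lang e)"

definition deterministic_lang :: "'a gstring set \<Rightarrow> bool" where
  "deterministic_lang L \<longleftrightarrow>
     (\<forall>w\<in>L. \<forall>w'\<in>L. w \<noteq> w' \<longrightarrow>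
        \<not> (\<exists>v. v \<noteq> [] \<and> w' = w @ v) \<and>
        (\<forall>i. i < length w \<and> i < length w' \<and> w ! i \<noteq> w' ! i
              \<and> (\<forall>j<i. w ! j = w' ! j) \<longrightarrow> w ! i = Atom))"

definition deterministic :: "'a kat \<Rightarrow> bool" where
  "deterministic e \<longleftrightarrow> deterministic_lang (lang e)"

inductive det_frag :: "'a kat \<Rightarrow> bool" where
  "det_frag (Test BTrue)"
| "det_frag (Test BFalse)"
| "det_frag (Prim p)"
| "det_frag e \<Longrightarrow> det_frag f \<Longrightarrow> det_frag (Seq e f)"

end

theory Submission
  imports Defs
begin

inductive wfg :: "'a gstring \<Rightarrow> bool" where
  wf1: "wfg [Atom]"
| wf2: "wfg w \<Longrightarrow> wfg (Atom # Act p # w)"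

lemma wfg_ne: "wfg w \<Longrightarrow> w \<noteq> [] \<and> hd w = Atom"
  by (induction rule: wfg.induct) auto

lemma wfg_fuse: "wfg w \<Longrightarrow> wfg x \<Longrightarrow> last w = hd x \<Longrightarrow> wfg (butlast w @ x)"
proof (induction arbitrary: x rule: wfg.induct)
  case wf1 then show ?case by simp
next
  case (wf2 w p)
  have "w \<noteq> []" using wfg_ne[OF wf2(1)] by simp
  then have "butlast (Atom # Act p # w) @ x = Atom # Act p # (butlast w @ x)"
    by simp
  moreover have "last w = hd x" using wf2.prems(2) \<open>w \<noteq> []\<close> by simp
  then have "wfg (butlast w @ x)" using wf2.IH wf2.prems(1) by blast
  ultimately show ?case by (simp only:) (rule wfg.wf2)
qed

lemma fuse_wf: "\<forall>w\<in>L. wfg w \<Longrightarrow> \<forall>w\<in>K. wfg w \<Longrightarrow> \<forall>w\<in>fuse L K. wfg w"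
proof
  fix u assume L: "\<forall>w\<in>L. wfg w" and K: "\<forall>w\<in>K. wfg w" and "u \<in> fuse L K"
  then obtain w x where h: "u = butlast w @ x" "w \<in> L" "x \<in> K" "last w = hd x"
    unfolding fuse_def by blast
  show "wfg u" unfolding h(1) by (rule wfg_fuse) (use h L K in auto)
qed

lemma fpow_wf: assumes L: "\<forall>w\<in>L. wfg w" shows "\<forall>w\<in>fpow L n. wfg w"
proof (induction n)
  case 0 then show ?case by (simp add: At_def wf1)
next
  case (Suc n) show ?case unfolding fpow.simps by (rule fuse_wf[OF L Suc.IH])
qed

lemma lang_wf: "\<forall>w\<in>lang e. wfg w"
proof (induction e)
  case (Test b) then show ?case by (simp add: At_def wf1)
next
  case (Prim p) show ?case by (auto intro: wf1 wf2)
next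
  case (Plus e f) then show ?case by auto
next
  case (Seq e f) show ?case unfolding lang.simps by (rule fuse_wf[OF Seq.IH])
next
  case (Star e)
  show ?case
  proof
    fix w assume "w \<in> lang (Star e)"
    then obtain n where "w \<in> fpow (lang e) n" by (auto simp: fstar_def)
    then show "wfg w" using fpow_wf[OF Star] by blast
  qed
qed

lemma wfg_diff:
  "wfg w \<Longrightarrow> wfg w' \<Longrightarrow> w \<noteq> w' \<Longrightarrow>
   (\<exists>v. v \<noteq> [] \<and> w' = w @ v) \<or> (\<exists>v. v \<noteq> [] \<and> w = w' @ v) \<or>
   (\<exists>i. i < length w \<and> i < length w' \<and> w ! i \<noteq> w' ! i
              \<and> (\<forall>j<i. w ! j = w' ! j) \<and> w ! i \<noteq> Atom)"
proof (induction arbitrary: w' rule: wfg.induct)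
  case wf1
  from wf1(1) show ?case
  proof cases
    case wf1 then show ?thesis using wf1.prems by simp
  next
    case (wf2 u p)
    then have "Act p # u \<noteq> [] \<and> w' = [Atom] @ (Act p # u)" by simp
    then show ?thesis by blast
  qed
next
  case (wf2 w p)
  from wf2(3) show ?case
  proof cases
    case wf1
    then have "Act p # w \<noteq> [] \<and> Atom # Act p # w = w' @ (Act p # w)" by simp
    then show ?thesis by blast
  next
    case wf2': (wf2 u q)
    show ?thesis
    proof (cases "p = q")
      case False
      have "1 < length (Atom # Act p # w) \<and> 1 < length w' \<and> (Atom # Act p # w) ! 1 \<noteq> w' ! 1
              \<and> (\<forall>j<1. (Atom # Act p # w) ! j = w' ! j) \<and> (Atom # Act p # w) ! 1 \<noteq> Atom"
        using False wf2'(1) by simp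
      then show ?thesis by blast
    next
      case True
      have "w \<noteq> u" using True wf2'(1) wf2.prems(2) by auto
      from wf2.IH[OF wf2'(2) this] show ?thesis
      proof (elim disjE exE conjE)
        fix v assume "v \<noteq> []" "u = w @ v"
        then have "v \<noteq> [] \<and> w' = (Atom # Act p # w) @ v" using True wf2'(1) by simp
        then show ?thesis by blast
      next
        fix v assume "v \<noteq> []" "w = u @ v"
        then have "v \<noteq> [] \<and> Atom # Act p # w = w' @ v" using True wf2'(1) by simp
        then show ?thesis by blast
      next
        fix i assume h: "i < length w" "i < length u" "w ! i \<noteq> u ! i"
          "\<forall>j<i. w ! j = u ! j" "w ! i \<noteq> Atom"
        have "\<forall>j<Suc (Suc i). (Atom # Act p # w) ! j = w' ! j"
        proof (intro allI impI)
          fix j assume "j < Suc (Suc i)"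
          then consider "j = 0" | "j = 1" | k where "j = Suc (Suc k)" "k < i"
            by (metis One_nat_def less_Suc_eq_0_disj Suc_less_SucD)
          then show "(Atom # Act p # w) ! j = w' ! j"
            by cases (use h True wf2'(1) in simp_all)
        qed
        moreover have "Suc (Suc i) < length (Atom # Act p # w) \<and> Suc (Suc i) < length w'
           \<and> (Atom # Act p # w) ! Suc (Suc i) \<noteq> w' ! Suc (Suc i)
           \<and> (Atom # Act p # w) ! Suc (Suc i) \<noteq> Atom"
          using h True wf2'(1) by simp
        ultimately show ?thesis by blast
      qed
    qed
  qed
qed

lemma det_sub: "deterministic e \<Longrightarrow> w \<in> lang e \<Longrightarrow> w' \<in> lang e \<Longrightarrow> w = w'"
proof (rule ccontr)
  assume d: "deterministic e" and h: "w \<in> lang e" "w' \<in> lang e" "w \<noteq> w'"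
  have "wfg w" "wfg w'" using h lang_wf by blast+
  from wfg_diff[OF this h(3)] have
    "(\<exists>v. v \<noteq> [] \<and> w' = w @ v) \<or> (\<exists>v. v \<noteq> [] \<and> w = w' @ v) \<or>
     (\<exists>i. i < length w \<and> i < length w' \<and> w ! i \<noteq> w' ! i
              \<and> (\<forall>j<i. w ! j = w' ! j) \<and> w ! i \<noteq> Atom)" .
  moreover have D: "\<forall>w\<in>lang e. \<forall>w'\<in>lang e. w \<noteq> w' \<longrightarrow>
        \<not> (\<exists>v. v \<noteq> [] \<and> w' = w @ v) \<and>
        (\<forall>i. i < length w \<and> i < length w' \<and> w ! i \<noteq> w' ! i
              \<and> (\<forall>j<i. w ! j = w' ! j) \<longrightarrow> w ! i = Atom)"
    using d unfolding deterministic_def deterministic_lang_def .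
  note A = D[rule_format, OF h(1) h(2) h(3)]
  have "w' \<noteq> w" using h(3) by simp
  note B = D[rule_format, OF h(2) h(1) this]
  ultimately show False using A B by blast
qed

definition subs :: "'b set \<Rightarrow> bool" where "subs A \<longleftrightarrow> (\<forall>x\<in>A. \<forall>y\<in>A. x = y)"

lemma fuse_subs: assumes L: "subs L" and K: "subs K" shows "subs (fuse L K)"
  unfolding subs_def
proof (intro ballI)
  fix u u' assume "u \<in> fuse L K" "u' \<in> fuse L K"
  then obtain w x w' x' where h: "u = butlast w @ x" "w \<in> L" "x \<in> K"
     "u' = butlast w' @ x'" "w' \<in> L" "x' \<in> K"
    unfolding fuse_def by blast
  have "w = w'" using L h(2,5) unfolding subs_def by blast
  moreover have "x = x'" using K h(3,6) unfolding subs_def by blast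
  ultimately show "u = u'" using h(1,4) by simp
qed

lemma fuse_single: assumes "a \<noteq> []" "w \<noteq> []" "last a = hd w"
  shows "fuse {a} {w} = {butlast a @ w}"
proof
  show "fuse {a} {w} \<subseteq> {butlast a @ w}" unfolding fuse_def by blast
  show "{butlast a @ w} \<subseteq> fuse {a} {w}" unfolding fuse_def using assms by blast
qed

lemma frag_sub: "det_frag e \<Longrightarrow> subs (lang e)"
proof (induction rule: det_frag.induct)
  case (4 e f)
  then show ?case by (simp add: fuse_subs)
qed (auto simp: At_def subs_def)

lemma word_frag: "wfg w \<Longrightarrow> \<exists>f. det_frag f \<and> lang f = {w}"
proof (induction rule: wfg.induct)
  case wf1 then show ?case
    by (rule_tac x="Test BTrue" in exI) (auto simp: At_def intro: det_frag.intros)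
next
  case (wf2 w p)
  then obtain f where f: "det_frag f" "lang f = {w}" by blast
  have "w \<noteq> []" "hd w = Atom" using wfg_ne[OF wf2(1)] by auto
  then have "fuse {[Atom, Act p, Atom]} {w} = {Atom # Act p # w}"
    using fuse_single[of "[Atom, Act p, Atom]" w] by simp
  then show ?case using f
    by (rule_tac x="Seq (Prim p) f" in exI) (auto intro: det_frag.intros)
qed

theorem theorem7p4:
  shows "(\<forall>e :: ('a::finite) kat. det_frag e \<longrightarrow> deterministic e) \<and>
         (\<forall>e :: ('a::finite) kat. deterministic e \<longrightarrow> (\<exists>f. det_frag f \<and> lang f = lang e))"
proof (intro conjI allI impI)
  fix e :: "'a kat"
  assume "det_frag e"
  from frag_sub[OF this] have S: "\<And>x y. x \<in> lang e \<Longrightarrow> y \<in> lang e \<Longrightarrow> x = y"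
    unfolding subs_def by blast
  show "deterministic e"
    unfolding deterministic_def deterministic_lang_def
  proof (intro ballI impI, rule FalseE)
    fix x y assume "x \<in> lang e" "y \<in> lang e" "x \<noteq> y"
    then show "False" using S by blast
  qed
next
  fix e :: "'a kat"
  assume d: "deterministic e"
  show "\<exists>f. det_frag f \<and> lang f = lang e"
  proof (cases "lang e = {}")
    case True then show ?thesis
      by (rule_tac x="Test BFalse" in exI) (auto intro: det_frag.intros)
  next
    case False
    then obtain w where w: "w \<in> lang e" by blast
    with det_sub[OF d] have "lang e = {w}" by blast
    moreover have "wfg w" using lang_wf w by blast
    ultimately show ?thesis using word_frag by metis
  qed
qed

end
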